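(* Fix parameters and a population size vector $\mathbf m$ as in the context, with Assumption (A). Let $\mathbf y^\star\in\arg\min_{\mathbf y\in\mathcal Y}\overline{SC}(\mathbf y)$ be any minimizer of the social cost, and let $d^\dagger=\min\{d\in\mathcal D: y^\star_d>0\}$, with $d^\dagger=D_{\max}+1$ if this set is empty. If $d^\dagger<D_{\max}$, then $y^\star_d=m_d$ for all $d>d^\dagger$.
   Context: Let $D_{\max}\in\mathbb N$, $\mathcal D=\{1,\dots,D_{\max}\}$, $\mathcal A=\{I,N,P\}$. A population size vector is $\mathbf m=(m_d)_{d\in\mathcal D}$ with $m_d>0$, $\sum_d m_d=1$. A social state is $\mathbf x=(x_{d,a})$ with $x_{d,a}\ge0$, $\sum_a x_{d,a}=m_d$. Parameters: $\tau_{DA}\in(0,1]$; $0\le L_P<L_U$, $\Delta L=L_U-L_P$; $0\le p_P^i<p_U^i\le1$; $\beta_{IA}\in(0,1]$; $K\in\mathbb N$; $c_P,c_I\ge0$; $\xi_{\rm cov}\in(0,1]$, $ded\ge0$. Define $w_d=d\,m_d/\sum_{d'}d'm_{d'}$, $g_{d,a}=x_{d,a}/m_d$, $g_{d,U}=g_{d,N}+g_{d,I}$, $\gamma(\mathbf x)=\beta_{IA}\sum_d w_d(g_{d,P}p_P^i+g_{d,U}p_U^i)$, $\lambda(\mathbf x)=\beta_{IA}\sum_d w_d(d-1)(g_{d,P}p_P^i+g_{d,U}p_U^i)$, $e(\mathbf x)=\gamma(\mathbf x)\sum_{k=1}^K\lambda(\mathbf x)^{k-1}$, $C_{d,P}(\mathbf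 x)=\tau_{DA}(1+d\,e(\mathbf x))L_P+c_P$, $C_{d,N}(\mathbf x)=\tau_{DA}(1+d\,e(\mathbf x))L_U$. Let $\mathcal Y=\prod_{d\in\mathcal D}[0,m_d]$ and for $\mathbf y\in\mathcal Y$ let $\mathbf X(\mathbf y)$ be the social state with $X_{d,P}=y_d$, $X_{d,N}=m_d-y_d$, $X_{d,I}=0$. The social cost is $\overline{SC}(\mathbf y)=\sum_{d\in\mathcal D}\big(y_d\,C_{d,P}(\mathbf X(\mathbf y))+(m_d-y_d)\,C_{d,N}(\mathbf X(\mathbf y))\big)$. Assumption (A): $L_P<(1-\xi_{\rm cov})L_U$ and $c_P>c_I+ded$. *)

theory Defs
  imports Complex_Main
begin

text \<open>Actions: I (insured), N (no protection), P (protected).\<close>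
datatype action = ActI | ActN | ActP

text \<open>Degrees are the natural numbers 1..Dmax. A population size vector is m :: nat => real,
  a social state is x :: nat => action => real (only indices d in 1..Dmax matter).\<close>

definition degs :: "nat \<Rightarrow> nat set" where
  "degs Dmax = {1..Dmax}"

definition pop_size_vector :: "nat \<Rightarrow> (nat \<Rightarrow> real) \<Rightarrow> bool" where
  "pop_size_vector Dmax m \<longleftrightarrow> (\<forall>d\<in>degs Dmax. m d > 0) \<and> (\<Sum>d\<in>degs Dmax. m d) = 1"

definition wgt :: "nat \<Rightarrow> (nat \<Rightarrow> real) \<Rightarrow> nat \<Rightarrow> real" where
  "wgt Dmax m d = real d * m d / (\<Sum>d'\<in>degs Dmax. real d' * m d')"

definition gfrac :: "(nat \<Rightarrow> real) \<Rightarrow> (nat \<Rightarrow> action \<Rightarrow> real) \<Rightarrow> nat \<Rightarrow> action \<Rightarrow> real" where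
  "gfrac m x d a = x d a / m d"

definition gU :: "(nat \<Rightarrow> real) \<Rightarrow> (nat \<Rightarrow> action \<Rightarrow> real) \<Rightarrow> nat \<Rightarrow> real" where
  "gU m x d = gfrac m x d ActN + gfrac m x d ActI"

definition gam :: "nat \<Rightarrow> (nat \<Rightarrow> real) \<Rightarrow> real \<Rightarrow> real \<Rightarrow> real \<Rightarrow> (nat \<Rightarrow> action \<Rightarrow> real) \<Rightarrow> real" where
  "gam Dmax m beta pP pU x =
     beta * (\<Sum>d\<in>degs Dmax. wgt Dmax m d * (gfrac m x d ActP * pP + gU m x d * pU))"

definition lam :: "nat \<Rightarrow> (nat \<Rightarrow> real) \<Rightarrow> real \<Rightarrow> real \<Rightarrow> real \<Rightarrow> (nat \<Rightarrow> action \<Rightarrow> real) \<Rightarrow> real" where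
  "lam Dmax m beta pP pU x =
     beta * (\<Sum>d\<in>degs Dmax. wgt Dmax m d * (real d - 1) * (gfrac m x d ActP * pP + gU m x d * pU))"

definition eprop :: "nat \<Rightarrow> (nat \<Rightarrow> real) \<Rightarrow> real \<Rightarrow> real \<Rightarrow> real \<Rightarrow> nat \<Rightarrow> (nat \<Rightarrow> action \<Rightarrow> real) \<Rightarrow> real" where
  "eprop Dmax m beta pP pU K x =
     gam Dmax m beta pP pU x * (\<Sum>k\<in>{1..K}. lam Dmax m beta pP pU x ^ (k - 1))"

definition costP :: "nat \<Rightarrow> (nat \<Rightarrow> real) \<Rightarrow> real \<Rightarrow> real \<Rightarrow> real \<Rightarrow> nat \<Rightarrow> real \<Rightarrow> real \<Rightarrow> real
    \<Rightarrow> nat \<Rightarrow> (nat \<Rightarrow> action \<Rightarrow> real) \<Rightarrow> real" where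
  "costP Dmax m beta pP pU K tau LP cP d x =
     tau * (1 + real d * eprop Dmax m beta pP pU K x) * LP + cP"

definition costN :: "nat \<Rightarrow> (nat \<Rightarrow> real) \<Rightarrow> real \<Rightarrow> real \<Rightarrow> real \<Rightarrow> nat \<Rightarrow> real \<Rightarrow> real
    \<Rightarrow> nat \<Rightarrow> (nat \<Rightarrow> action \<Rightarrow> real) \<Rightarrow> real" where
  "costN Dmax m beta pP pU K tau LU d x =
     tau * (1 + real d * eprop Dmax m beta pP pU K x) * LU"

definition Ybox :: "nat \<Rightarrow> (nat \<Rightarrow> real) \<Rightarrow> (nat \<Rightarrow> real) set" where
  "Ybox Dmax m = {y. \<forall>d\<in>degs Dmax. 0 \<le> y d \<and> y d \<le> m d}"

definition Xstate :: "(nat \<Rightarrow> real) \<Rightarrow> (nat \<Rightarrow> real) \<Rightarrow> nat \<Rightarrow> action \<Rightarrow> real" where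
  "Xstate m y d a = (case a of ActP \<Rightarrow> y d | ActN \<Rightarrow> m d - y d | ActI \<Rightarrow> 0)"

definition social_cost :: "nat \<Rightarrow> (nat \<Rightarrow> real) \<Rightarrow> real \<Rightarrow> real \<Rightarrow> real \<Rightarrow> nat \<Rightarrow> real \<Rightarrow> real \<Rightarrow> real
    \<Rightarrow> real \<Rightarrow> (nat \<Rightarrow> real) \<Rightarrow> real" where
  "social_cost Dmax m beta pP pU K tau LP LU cP y =
     (\<Sum>d\<in>degs Dmax.
        y d * costP Dmax m beta pP pU K tau LP cP d (Xstate m y)
      + (m d - y d) * costN Dmax m beta pP pU K tau LU d (Xstate m y))"

definition d_dagger :: "nat \<Rightarrow> (nat \<Rightarrow> real) \<Rightarrow> nat" where
  "d_dagger Dmax y = (if {d\<in>degs Dmax. y d > 0} = {} then Dmax + 1 else Min {d\<in>degs Dmax. y d > 0})"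

end

theory Submission imports Defs begin

lemma two_pt:
  assumes "finite A" "a \<in> A" "b \<in> A" "a \<noteq> b"
  fixes f :: "'a \<Rightarrow> 'c \<Rightarrow> real"
  shows "(\<Sum>k\<in>A. f k ((y(a := u, b := v)) k)) = (\<Sum>k\<in>A. f k (y k)) + (f a u - f a (y a)) + (f b v - f b (y b))"
proof -
  let ?y' = "y(a := u, b := v)"
  have e: "(\<Sum>k\<in>A - {a} - {b}. f k (?y' k)) = (\<Sum>k\<in>A - {a} - {b}. f k (y k))"
    by (rule sum.cong) auto
  have 1: "(\<Sum>k\<in>A. f k (?y' k)) = f a u + (f b v + (\<Sum>k\<in>A - {a} - {b}. f k (?y' k)))"
    using assms by (simp add: sum.remove[of A a] sum.remove[of "A - {a}" b])
  have 2: "(\<Sum>k\<in>A. f k (y k)) = f a (y a) + (f b (y b) + (\<Sum>k\<in>A - {a} - {b}. f k (y k)))"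
    using assms by (simp add: sum.remove[of A a] sum.remove[of "A - {a}" b])
  show ?thesis unfolding 1 2 e by linarith
qed

definition Ssum :: "nat \<Rightarrow> (nat \<Rightarrow> real) \<Rightarrow> real" where
  "Ssum Dmax m = (\<Sum>d'\<in>degs Dmax. real d' * m d')"

lemma Ssum_pos:
  assumes "pop_size_vector Dmax m"
  shows "Ssum Dmax m > 0"
proof -
  have fin: "finite (degs Dmax)" by (simp add: degs_def)
  have "degs Dmax \<noteq> {}" using assms by (auto simp: pop_size_vector_def)
  then obtain a where a: "a \<in> degs Dmax" by blast
  show ?thesis unfolding Ssum_def
    by (rule sum_pos2[OF fin a]) (use assms a in \<open>auto simp: degs_def pop_size_vector_def intro!: mult_nonneg_nonneg mult_pos_pos less_imp_le\<close>)
qed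

lemma gfracP: "gfrac m (Xstate m y) d ActP = y d / m d"
  by (simp add: gfrac_def Xstate_def)
lemma gUX: "gU m (Xstate m y) d = (m d - y d) / m d"
  by (simp add: gU_def gfrac_def Xstate_def)

lemma gam_X:
  assumes "pop_size_vector Dmax m"
  shows "gam Dmax m beta pP pU (Xstate m y) =
    beta * (\<Sum>d\<in>degs Dmax. real d * (y d * pP + (m d - y d) * pU)) / Ssum Dmax m"
proof -
  have "(\<Sum>d\<in>degs Dmax. wgt Dmax m d * (y d / m d * pP + (m d - y d) / m d * pU))
      = (\<Sum>d\<in>degs Dmax. real d * (y d * pP + (m d - y d) * pU) / Ssum Dmax m)"
  proof (rule sum.cong)
    fix d assume "d \<in> degs Dmax"
    then have "m d > 0" using assms by (simp add: pop_size_vector_def)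
    have "Ssum Dmax m > 0" using Ssum_pos[OF assms] .
    then show "wgt Dmax m d * (y d / m d * pP + (m d - y d) / m d * pU) = real d * (y d * pP + (m d - y d) * pU) / Ssum Dmax m"
      using \<open>Ssum Dmax m > 0\<close> \<open>m d > 0\<close> by (simp add: wgt_def Ssum_def field_simps)
  qed simp
  then show ?thesis by (simp add: gam_def gfracP gUX sum_divide_distrib[symmetric])
qed

lemma lam_X:
  assumes "pop_size_vector Dmax m"
  shows "lam Dmax m beta pP pU (Xstate m y) =
    beta * (\<Sum>d\<in>degs Dmax. real d * (real d - 1) * (y d * pP + (m d - y d) * pU)) / Ssum Dmax m"
proof -
  have "(\<Sum>d\<in>degs Dmax. wgt Dmax m d * (real d - 1) * (y d / m d * pP + (m d - y d) / m d * pU))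
      = (\<Sum>d\<in>degs Dmax. real d * (real d - 1) * (y d * pP + (m d - y d) * pU) / Ssum Dmax m)"
  proof (rule sum.cong)
    fix d assume "d \<in> degs Dmax"
    then have "m d > 0" using assms by (simp add: pop_size_vector_def)
    have "Ssum Dmax m > 0" using Ssum_pos[OF assms] .
    then show "wgt Dmax m d * (real d - 1) * (y d / m d * pP + (m d - y d) / m d * pU) = real d * (real d - 1) * (y d * pP + (m d - y d) * pU) / Ssum Dmax m"
      using \<open>Ssum Dmax m > 0\<close> \<open>m d > 0\<close> by (simp add: wgt_def Ssum_def field_simps)
  qed simp
  then show ?thesis by (simp add: lam_def gfracP gUX sum_divide_distrib[symmetric])
qed

lemma sc_X:
  "social_cost Dmax m beta pP pU K tau LP LU cP y =
    (\<Sum>d\<in>degs Dmax. tau * (LU * m d - (LU - LP) * y d) + cP * y d)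
    + tau * eprop Dmax m beta pP pU K (Xstate m y) * (\<Sum>d\<in>degs Dmax. real d * (LU * m d - (LU - LP) * y d))"
proof -
  define e where "e = eprop Dmax m beta pP pU K (Xstate m y)"
  have "social_cost Dmax m beta pP pU K tau LP LU cP y =
     (\<Sum>d\<in>degs Dmax. (tau * (LU * m d - (LU - LP) * y d) + cP * y d) + tau * e * (real d * (LU * m d - (LU - LP) * y d)))"
    unfolding social_cost_def costP_def costN_def e_def[symmetric]
    by (rule sum.cong) (simp_all add: algebra_simps)
  also have "\<dots> = (\<Sum>d\<in>degs Dmax. tau * (LU * m d - (LU - LP) * y d) + cP * y d)
    + tau * e * (\<Sum>d\<in>degs Dmax. real d * (LU * m d - (LU - LP) * y d))"
    by (simp add: sum.distrib sum_distrib_left)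
  finally show ?thesis by (simp add: e_def)
qed

theorem theorem4:
  fixes Dmax K :: nat and m ystar :: "nat \<Rightarrow> real"
    and tau LP LU pP pU beta cP cI xi ded :: real
  assumes "Dmax \<ge> 1"
    and "pop_size_vector Dmax m"
    and "0 < tau" "tau \<le> 1"
    and "0 \<le> LP" "LP < LU"
    and "0 \<le> pP" "pP < pU" "pU \<le> 1"
    and "0 < beta" "beta \<le> 1"
    and "K \<ge> 1"
    and "cP \<ge> 0" "cI \<ge> 0"
    and "0 < xi" "xi \<le> 1" "ded \<ge> 0"
    and A1: "LP < (1 - xi) * LU"
    and A2: "cP > cI + ded"
    and ymem: "ystar \<in> Ybox Dmax m"
    and ymin: "\<forall>y\<in>Ybox Dmax m. social_cost Dmax m beta pP pU K tau LP LU cP ystar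
                                 \<le> social_cost Dmax m beta pP pU K tau LP LU cP y"
    and "d_dagger Dmax ystar < Dmax"
  shows "\<forall>d\<in>degs Dmax. d > d_dagger Dmax ystar \<longrightarrow> ystar d = m d"
proof -
  define dd where "dd = d_dagger Dmax ystar"
  have fin: "finite (degs Dmax)" by (simp add: degs_def)
  have ne: "{d\<in>degs Dmax. ystar d > 0} \<noteq> {}"
  proof
    assume "{d\<in>degs Dmax. ystar d > 0} = {}"
    then have "d_dagger Dmax ystar = Dmax + 1" by (simp add: d_dagger_def)
    then show False using assms(22) by simp
  qed
  have ddM: "dd = Min {d\<in>degs Dmax. ystar d > 0}"
    unfolding dd_def d_dagger_def if_not_P[OF ne] by (rule refl)
  have "dd \<in> {d\<in>degs Dmax. ystar d > 0}" unfolding ddM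
    by (rule Min_in) (use fin ne in auto)
  then have dd_in: "dd \<in> degs Dmax" and ydd: "ystar dd > 0" by auto
  have mpos: "\<And>k. k \<in> degs Dmax \<Longrightarrow> m k > 0" using assms(2) by (simp add: pop_size_vector_def)
  have box: "\<And>k. k \<in> degs Dmax \<Longrightarrow> 0 \<le> ystar k \<and> ystar k \<le> m k" using ymem by (simp add: Ybox_def)
  have Spos: "Ssum Dmax m > 0" using Ssum_pos[OF assms(2)] .
  show ?thesis unfolding dd_def[symmetric]
  proof (intro ballI impI, rule ccontr)
    fix d assume d_in: "d \<in> degs Dmax" and ddd: "dd < d" and neq: "ystar d \<noteq> m d"
    have yd: "ystar d < m d" using box[OF d_in] neq by auto
    define \<delta> where "\<delta> = min (ystar dd) (m d - ystar d)"
    have dpos: "\<delta> > 0" using yd ydd by (simp add: \<delta>_def)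
    define y' where "y' = ystar(dd := ystar dd - \<delta>, d := ystar d + \<delta>)"
    have neqd: "dd \<noteq> d" using ddd by simp
    have y'box: "y' \<in> Ybox Dmax m"
      unfolding Ybox_def y'_def using box neqd \<delta>_def box[OF d_in] box[OF dd_in] dpos
      by (auto simp: min_def)
    define G where "G y = (\<Sum>k\<in>degs Dmax. real k * (y k * pP + (m k - y k) * pU))" for y
    define L where "L y = (\<Sum>k\<in>degs Dmax. real k * (real k - 1) * (y k * pP + (m k - y k) * pU))" for y
    define W where "W y = (\<Sum>k\<in>degs Dmax. real k * (LU * m k - (LU - LP) * y k))" for y
    define F where "F y = (\<Sum>k\<in>degs Dmax. tau * (LU * m k - (LU - LP) * y k) + cP * y k)" for y
    define P where "P l = (\<Sum>k\<in>{1..K}. (l::real) ^ (k - 1))" for l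
    have eX: "eprop Dmax m beta pP pU K (Xstate m y) = (beta * G y / Ssum Dmax m) * P (beta * L y / Ssum Dmax m)" for y
      unfolding eprop_def gam_X[OF assms(2)] lam_X[OF assms(2)] G_def L_def P_def by simp
    have scX: "social_cost Dmax m beta pP pU K tau LP LU cP y = F y + tau * ((beta * G y / Ssum Dmax m) * P (beta * L y / Ssum Dmax m)) * W y" for y
      unfolding sc_X eX F_def W_def by simp
    have y'eq: "y' = ystar(dd := ystar dd - \<delta>, d := ystar d + \<delta>)" by (simp add: y'_def)
    have G': "G y' = G ystar + (real d - real dd) * \<delta> * (pP - pU)"
      unfolding G_def y'_def
      by (subst two_pt[OF fin dd_in d_in neqd, where f="\<lambda>k v. real k * (v * pP + (m k - v) * pU)" and y=ystar and u="ystar dd - \<delta>" and v="ystar d + \<delta>"])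
         (simp add: algebra_simps)
    have L': "L y' = L ystar + (real d * (real d - 1) - real dd * (real dd - 1)) * \<delta> * (pP - pU)"
      unfolding L_def y'_def
      by (subst two_pt[OF fin dd_in d_in neqd, where f="\<lambda>k v. real k * (real k - 1) * (v * pP + (m k - v) * pU)" and y=ystar and u="ystar dd - \<delta>" and v="ystar d + \<delta>"])
         (simp add: algebra_simps)
    have W': "W y' = W ystar - (real d - real dd) * \<delta> * (LU - LP)"
      unfolding W_def y'_def
      by (subst two_pt[OF fin dd_in d_in neqd, where f="\<lambda>k v. real k * (LU * m k - (LU - LP) * v)" and y=ystar and u="ystar dd - \<delta>" and v="ystar d + \<delta>"])
         (simp add: algebra_simps)
    have F': "F y' = F ystar"
      unfolding F_def y'_def
      by (subst two_pt[OF fin dd_in d_in neqd, where f="\<lambda>k v. tau * (LU * m k - (LU - LP) * v) + cP * v" and y=ystar and u="ystar dd - \<delta>" and v="ystar d + \<delta>"])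
         (simp add: algebra_simps)
    have y'b: "\<And>k. k \<in> degs Dmax \<Longrightarrow> 0 \<le> y' k \<and> y' k \<le> m k" using y'box by (simp add: Ybox_def)
    have k1: "\<And>k. k \<in> degs Dmax \<Longrightarrow> real k \<ge> 1" by (simp add: degs_def)
    have term_nn: "0 \<le> v * pP + (mk - v) * pU" if "0 \<le> v" "v \<le> mk" for v mk
      using that assms(7,8) by (simp add: add_nonneg_nonneg mult_nonneg_nonneg)
    have G'nn: "G y' \<ge> 0" unfolding G_def
      by (rule sum_nonneg) (use y'b term_nn k1 in \<open>auto intro!: mult_nonneg_nonneg\<close>)
    have L'nn: "L y' \<ge> 0" unfolding L_def
      by (rule sum_nonneg) (use y'b term_nn k1 in \<open>auto intro!: mult_nonneg_nonneg\<close>)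
    have W'nn: "W y' \<ge> 0" unfolding W_def
    proof (rule sum_nonneg)
      fix k assume k: "k \<in> degs Dmax"
      have "LU * m k - (LU - LP) * y' k = LU * (m k - y' k) + LP * y' k" by (simp add: algebra_simps)
      also have "\<dots> \<ge> 0" using y'b[OF k] assms(5,6) by simp
      finally show "0 \<le> real k * (LU * m k - (LU - LP) * y' k)" by simp
    qed
    have Gpos: "G ystar > 0" unfolding G_def
    proof (rule sum_pos2[OF fin d_in])
      have "0 < (m d - ystar d) * pU" using yd assms(7,8) by simp
      moreover have "0 \<le> ystar d * pP" using box[OF d_in] assms(7) by simp
      ultimately show "0 < real d * (ystar d * pP + (m d - ystar d) * pU)" using k1[OF d_in] by simp
    qed (use box term_nn k1 in \<open>auto intro!: mult_nonneg_nonneg\<close>)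
    have dpos2: "real d - real dd > 0" using ddd by simp
    have GG: "G y' \<le> G ystar" unfolding G'
      using dpos2 dpos assms(8) by (simp add: mult_pos_pos mult_nonneg_nonpos)
    have dd1: "real d * (real d - 1) - real dd * (real dd - 1) \<ge> 0"
    proof -
      have "real dd \<ge> 1" using k1[OF dd_in] .
      moreover have "real dd \<le> real d" using ddd by simp
      ultimately have "real dd * (real dd - 1) \<le> real d * (real d - 1)"
        by (intro mult_mono) auto
      then show ?thesis by simp
    qed
    have LL: "L y' \<le> L ystar" unfolding L'
      using dd1 dpos assms(8) by (simp add: mult_nonneg_nonpos)
    have WW: "W y' < W ystar" unfolding W'
      using dpos2 dpos assms(6) by simp
    have beS: "beta / Ssum Dmax m > 0" using assms(10) Spos by simp
    have Pmono: "P l' \<le> P l" if "0 \<le> l'" "l' \<le> l" for l l'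
      unfolding P_def by (rule sum_mono) (use that in \<open>auto intro: power_mono\<close>)
    have Pnn: "P l \<ge> 0" if "0 \<le> l" for l
      unfolding P_def by (rule sum_nonneg) (use that in auto)
    have Ppos: "P l > 0" if "0 \<le> l" for l
      unfolding P_def by (rule sum_pos2[of _ 1]) (use that assms(12) in auto)
    define g' where "g' = beta * G y' / Ssum Dmax m"
    define g where "g = beta * G ystar / Ssum Dmax m"
    define l' where "l' = beta * L y' / Ssum Dmax m"
    define l where "l = beta * L ystar / Ssum Dmax m"
    have g'nn: "g' \<ge> 0" unfolding g'_def using G'nn assms(10) Spos by simp
    have gg: "g' \<le> g" unfolding g'_def g_def using GG assms(10) Spos
      by (simp add: divide_right_mono mult_left_mono)
    have gpos: "g > 0" unfolding g_def using Gpos assms(10) Spos by simp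
    have l'nn: "l' \<ge> 0" unfolding l'_def using L'nn assms(10) Spos by simp
    have ll: "l' \<le> l" unfolding l'_def l_def using LL assms(10) Spos
      by (simp add: divide_right_mono mult_left_mono)
    have lnn: "l \<ge> 0" using l'nn ll by simp
    have e_le: "g' * P l' \<le> g * P l"
      by (rule mult_mono) (use gg Pmono[OF l'nn ll] g'nn Pnn[OF lnn] Pnn[OF l'nn] in auto)
    have e_pos: "g * P l > 0" using gpos Ppos[OF lnn] by simp
    have "tau * (g' * P l') * W y' \<le> tau * (g * P l) * W y'"
      using e_le W'nn assms(3) by (simp add: mult_left_mono mult_right_mono)
    also have "\<dots> < tau * (g * P l) * W ystar"
      using mult_strict_left_mono[OF WW mult_pos_pos[OF assms(3) e_pos]] by simp
    finally have "social_cost Dmax m beta pP pU K tau LP LU cP y' < social_cost Dmax m beta pP pU K tau LP LU cP ystar"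
      unfolding scX F' g'_def[symmetric] g_def[symmetric] l'_def[symmetric] l_def[symmetric] by simp
    then show False using ymin y'box by force
  qed
qed

end
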